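(* Let $\kappa\in(0,4)$ and let $\alpha,\beta$ be the two roots of $m^2+(2-\kappa)m+1=0$; they are complex conjugate and non-real, and we label them so that $\operatorname{Im}\alpha>0$ and $\beta=\overline{\alpha}$. Define, for $\tau\ge 0$, $$u_0(\tau)=1+\frac{\sqrt{\kappa}}{\alpha-\beta}\left[\frac{e^{\alpha\tau}\operatorname{Erfc}\sqrt{\alpha\tau}}{\sqrt{\alpha}}-\frac{e^{\beta\tau}\operatorname{Erfc}\sqrt{\beta\tau}}{\sqrt{\beta}}\right].$$ Then $u_0$ is real-valued, $u_0'(\tau)>0$ for every $\tau>0$, and $u_0(\tau)\to 1$ as $\tau\to\infty$. In particular $u_0$ approaches the limit $1$ monotonically (increasingly).
   Context: $\operatorname{Erfc}$ denotes the complementary error function extended to an entire function of $z\in\mathbb{C}$: $\operatorname{Erfc}(z)=1-\frac{2}{\sqrt{\pi}}\int_0^z e^{-s^2}\,ds$. Square roots of complex numbers are principal square roots (argument in $(-\pi/2,\pi/2]$). *)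

theory Defs
  imports "HOL-Complex_Analysis.Complex_Analysis"
begin

text \<open>Complementary error function as an entire function:
  Erfc z = 1 - 2/sqrt pi * integral of exp(-s^2) from 0 to z
  (along the straight segment; the integrand is entire, so path independent).\<close>
definition Erfc :: "complex \<Rightarrow> complex" where
  "Erfc z = 1 - (2 / complex_of_real (sqrt pi)) *
              contour_integral (linepath 0 z) (\<lambda>s. exp (- (s ^ 2)))"

definition u0 :: "real \<Rightarrow> complex \<Rightarrow> complex \<Rightarrow> real \<Rightarrow> complex" where
  "u0 \<kappa> \<alpha> \<beta> \<tau> = 1 + (complex_of_real (sqrt \<kappa>) / (\<alpha> - \<beta>)) *
     (exp (\<alpha> * of_real \<tau>) * Erfc (csqrt (\<alpha> * of_real \<tau>)) / csqrt \<alpha>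
      - exp (\<beta> * of_real \<tau>) * Erfc (csqrt (\<beta> * of_real \<tau>)) / csqrt \<beta>)"

end

theory Submission
  imports Defs "HOL-Probability.Sinc_Integral"
begin



lemma Erfc_has_deriv:
  "(Erfc has_field_derivative (-(2 / complex_of_real (sqrt pi)) * exp (-(z^2)))) (at z)"
proof -
  let ?f = "\<lambda>s::complex. exp (- (s ^ 2))"
  have "((\<lambda>x. contour_integral (linepath 0 x) ?f) has_field_derivative ?f z) (at z within UNIV)"
  proof (rule triangle_contour_integrals_convex_primitive)
    show "continuous_on UNIV ?f" by (intro continuous_intros)
    fix b c :: complex
    have "?f holomorphic_on convex hull {0, b, c}" by (intro holomorphic_intros)
    from has_chain_integral_chain_integral3[OF Cauchy_theorem_triangle[OF this]]
    show "contour_integral (linepath 0 b) ?f + contour_integral (linepath b c) ?f +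
        contour_integral (linepath c 0) ?f = 0" .
  qed auto
  from DERIV_diff[OF DERIV_const DERIV_cmult[OF this[simplified]], of 1 "2 / complex_of_real (sqrt pi)"]
  show ?thesis unfolding Erfc_def[abs_def] by simp
qed

lemma Erfc_0 [simp]: "Erfc 0 = 1"
  by (simp add: Erfc_def)

lemma continuous_Erfc: "isCont Erfc z"
  using Erfc_has_deriv DERIV_isCont by blast

lemma csqrt_mult_real:
  assumes "t \<ge> 0"
  shows "csqrt (a * complex_of_real t) = csqrt a * complex_of_real (sqrt t)"
proof (cases "t = 0")
  case True then show ?thesis by simp
next
  case False
  then have s: "sqrt t > 0" using assms by simp
  show ?thesis
  proof (rule csqrt_unique)
    show "(csqrt a * complex_of_real (sqrt t))\<^sup>2 = a * complex_of_real t"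
      using assms by (simp add: power_mult_distrib flip: of_real_power)
    have "0 < Re (csqrt a) \<or> Re (csqrt a) = 0 \<and> 0 \<le> Im (csqrt a)"
      using csqrt_principal by blast
    moreover have "Re (csqrt a * complex_of_real (sqrt t)) = Re (csqrt a) * sqrt t"
      "Im (csqrt a * complex_of_real (sqrt t)) = Im (csqrt a) * sqrt t" by simp_all
    ultimately show "0 < Re (csqrt a * complex_of_real (sqrt t)) \<or>
      Re (csqrt a * complex_of_real (sqrt t)) = 0 \<and> 0 \<le> Im (csqrt a * complex_of_real (sqrt t))"
      using s by auto
  qed
qed

definition fa :: "complex \<Rightarrow> real \<Rightarrow> complex" where
  "fa a t = exp (a * of_real t) * Erfc (csqrt (a * of_real t)) / csqrt a"

lemma u0_fa: "u0 \<kappa> \<alpha> \<beta> t = 1 + (complex_of_real (sqrt \<kappa>) / (\<alpha> - \<beta>)) * (fa \<alpha> t - fa \<beta> t)"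
  by (simp add: u0_def fa_def)

lemma fa_deriv:
  assumes "Im a \<noteq> 0" "\<tau> > 0"
  shows "((fa a) has_vector_derivative (a * fa a \<tau> - 1 / complex_of_real (sqrt (pi * \<tau>)))) (at \<tau>)"
proof -
  let ?w = "complex_of_real \<tau>"
  have nn: "a * ?w \<notin> \<real>\<^sub>\<le>\<^sub>0" using assms
    by (auto simp: complex_nonpos_Reals_iff)
  have a0: "a \<noteq> 0" using assms by auto
  have sa0: "csqrt a \<noteq> 0" using a0 by simp
  have d1: "((\<lambda>w. a * w) has_field_derivative a) (at ?w)"
    using DERIV_cmult[OF DERIV_ident, of a] by simp
  have d2: "((\<lambda>w. csqrt (a * w)) has_field_derivative (a / (2 * csqrt (a * ?w)))) (at ?w)"
    by (rule has_field_derivative_csqrt'[OF d1 nn])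
  note d3 = DERIV_chain2[OF Erfc_has_deriv d2]
  have d4: "((\<lambda>w. exp (a * w)) has_field_derivative (exp (a * ?w) * a)) (at ?w)"
    by (rule DERIV_chain2[OF DERIV_exp d1])
  note d5 = DERIV_cdivide[OF DERIV_mult[OF d4 d3], of "csqrt a"]
  have e: "exp (a * ?w) * exp (-((csqrt (a * ?w))^2)) = 1"
    by (simp add: exp_minus)
  have s: "csqrt (a * ?w) = csqrt a * complex_of_real (sqrt \<tau>)"
    using assms csqrt_mult_real by auto
  have sq: "csqrt a * csqrt a = a" by (metis power2_csqrt power2_eq_square)
  have st: "sqrt \<tau> \<noteq> 0" using assms by simp
  have "((\<lambda>w. exp (a * w) * Erfc (csqrt (a * w)) / csqrt a) has_field_derivative
     (a * fa a \<tau> - 1 / complex_of_real (sqrt (pi * \<tau>)))) (at ?w)"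
  proof (rule DERIV_cong[OF d5])
    show "(exp (a * ?w) * a * Erfc (csqrt (a * ?w)) + 
      (- (2 / complex_of_real (sqrt pi)) * exp (- (csqrt (a * ?w))\<^sup>2) * (a / (2 * csqrt (a * ?w)))) * exp (a * ?w)) / csqrt a
      = a * fa a \<tau> - 1 / complex_of_real (sqrt (pi * \<tau>))"
      unfolding fa_def using e sa0 st sq
      apply (simp add: s real_sqrt_mult field_simps)
      done
  qed
  then show ?thesis unfolding fa_def[abs_def]
    by (intro has_vector_derivative_real_field) simp
qed



lemma integral_dominated_convergence_within:
  fixes s :: "real \<Rightarrow> 'a \<Rightarrow> 'b::{banach, second_countable_topology}" and w :: "'a \<Rightarrow> real"
  assumes "f \<in> borel_measurable M" "\<And>t. s t \<in> borel_measurable M" "integrable M w"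
    and lim: "AE x in M. ((\<lambda>i. s i x) \<longlongrightarrow> f x) (at t0 within S)"
    and bound: "\<forall>\<^sub>F i in at t0 within S. AE x in M. norm (s i x) \<le> w x"
  shows "((\<lambda>t. integral\<^sup>L M (s t)) \<longlongrightarrow> integral\<^sup>L M f) (at t0 within S)"
  unfolding tendsto_at_iff_sequentially
proof (intro allI impI)
  fix X :: "nat \<Rightarrow> real" assume XS: "\<forall>i. X i \<in> S - {t0}" and X0: "X \<longlonglongrightarrow> t0"
  have X: "filterlim X (at t0 within S) sequentially"
    using XS X0 by (auto simp: filterlim_at)
  from filterlim_iff[THEN iffD1, OF X, rule_format, OF bound]
  obtain N where w: "\<And>n. N \<le> n \<Longrightarrow> AE x in M. norm (s (X n) x) \<le> w x"
    by (auto simp: eventually_sequentially)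
  show "((\<lambda>t. integral\<^sup>L M (s t)) \<circ> X) \<longlonglongrightarrow> integral\<^sup>L M f"
    unfolding comp_def
  proof (rule LIMSEQ_offset, rule integral_dominated_convergence)
    show "AE x in M. norm (s (X (n + N)) x) \<le> w x" for n
      by (rule w) auto
    show "AE x in M. (\<lambda>n. s (X (n + N)) x) \<longlonglongrightarrow> f x"
      using lim
    proof eventually_elim
      fix x assume "((\<lambda>i. s i x) \<longlongrightarrow> f x) (at t0 within S)"
      then show "(\<lambda>n. s (X (n + N)) x) \<longlonglongrightarrow> f x"
        by (intro LIMSEQ_ignore_initial_segment filterlim_compose[OF _ X])
    qed
  qed (use assms in auto)
qed

lemma gauss_half:
  assumes "\<tau> > 0"
  shows "integral\<^sup>L lborel (\<lambda>t. indicator {0..} t * exp (- (\<tau> * t\<^sup>2))) = sqrt pi / (2 * sqrt \<tau>)"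
proof -
  have g: "integral\<^sup>L lborel (\<lambda>x. indicator {0..} x * exp (- x\<^sup>2)) = sqrt pi / 2"
    using gaussian_moment_0 by (simp add: has_bochner_integral_integral_eq)
  have s: "sqrt \<tau> > 0" using assms by simp
  have "integral\<^sup>L lborel (\<lambda>x. indicator {0..} x * exp (- x\<^sup>2)) =
     sqrt \<tau> * integral\<^sup>L lborel (\<lambda>x. indicator {0..} (0 + sqrt \<tau> * x) * exp (- (0 + sqrt \<tau> * x)\<^sup>2))"
    using lborel_integral_real_affine[of "sqrt \<tau>" "\<lambda>x. indicator {0..} x * exp (- x\<^sup>2)" 0] s by simp
  also have "(\<lambda>x. indicator {0..} (0 + sqrt \<tau> * x) * exp (- (0 + sqrt \<tau> * x)\<^sup>2)) =
     (\<lambda>t. indicator {0..} t * exp (- (\<tau> * t\<^sup>2)))"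
    using s assms by (auto simp: fun_eq_iff indicator_def power_mult_distrib zero_le_mult_iff)
  finally show ?thesis using g s by (simp add: field_simps)
qed

definition good :: "complex \<Rightarrow> bool" where
  "good a \<longleftrightarrow> Im a \<noteq> 0 \<and> cmod a = 1"

lemma den_bound_u:
  assumes "good a"
  obtains c where "c > 0" "\<And>u::real. u \<ge> 0 \<Longrightarrow> c * (1 + u) \<le> cmod (complex_of_real u + a)"
proof -
  define r where "r = Re a"
  have ri: "r\<^sup>2 + (Im a)\<^sup>2 = 1" using assms unfolding good_def r_def
    by (metis cmod_power2 power_one)
  have "(Im a)\<^sup>2 > 0" using assms by (simp add: good_def)
  then have "r\<^sup>2 < 1" using ri by linarith
  then have r1: "\<bar>r\<bar> < 1" by (simp add: abs_square_less_1)
  define c where "c = sqrt ((1 - \<bar>r\<bar>) / 2)"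
  have c0: "c > 0" using r1 by (simp add: c_def)
  have c2: "c\<^sup>2 = (1 - \<bar>r\<bar>) / 2" using r1 by (simp add: c_def)
  have key: "c * (1 + u) \<le> cmod (complex_of_real u + a)" if u: "u \<ge> 0" for u :: real
  proof -
    have "(cmod (complex_of_real u + a))\<^sup>2 = (u + r)\<^sup>2 + (Im a)\<^sup>2"
      by (simp add: cmod_power2 r_def)
    also have "(u + r)\<^sup>2 = u\<^sup>2 + 2 * u * r + r\<^sup>2" by (simp add: power2_sum)
    finally have n2: "(cmod (complex_of_real u + a))\<^sup>2 = u\<^sup>2 + 2 * u * r + 1" using ri by linarith
    have "0 \<le> (u - 1)\<^sup>2" by simp
    moreover have "(u - 1)\<^sup>2 = u\<^sup>2 - 2 * u + 1" by (simp add: power2_diff)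
    ultimately have h1: "2 * u \<le> u\<^sup>2 + 1" by linarith
    have e1: "(1 + u)\<^sup>2 = 1 + 2 * u + u\<^sup>2" by (simp add: power2_sum)
    have h2: "(1 + u)\<^sup>2 \<le> 2 * (u\<^sup>2 + 1)" unfolding e1 using h1 by simp
    have h3: "\<bar>r\<bar> * (2 * u) \<le> \<bar>r\<bar> * (u\<^sup>2 + 1)" using h1 by (rule mult_left_mono) simp
    have h4: "(- \<bar>r\<bar>) * u \<le> r * u" using u by (intro mult_right_mono) auto
    have h5: "(1 - \<bar>r\<bar>) / 2 * (1 + u)\<^sup>2 \<le> (1 - \<bar>r\<bar>) / 2 * (2 * (u\<^sup>2 + 1))"
      using h2 r1 by (intro mult_left_mono) auto
    have "(c * (1 + u))\<^sup>2 = (1 - \<bar>r\<bar>) / 2 * (1 + u)\<^sup>2" by (simp add: power_mult_distrib c2)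
    also have "\<dots> \<le> (1 - \<bar>r\<bar>) / 2 * (2 * (u\<^sup>2 + 1))" by (rule h5)
    also have "\<dots> = (u\<^sup>2 + 1) - \<bar>r\<bar> * (u\<^sup>2 + 1)" by (simp add: field_simps)
    also have "\<dots> \<le> u\<^sup>2 + 2 * u * r + 1" using h3 h4 by (simp add: algebra_simps)
    also have "\<dots> = (cmod (complex_of_real u + a))\<^sup>2" by (rule n2[symmetric])
    finally show ?thesis by (rule power2_le_imp_le) simp
  qed
  show ?thesis by (rule that[OF c0 key])
qed

lemma den_bound:
  assumes "good a"
  obtains K where "K > 0" "\<And>t::real. inverse (cmod (complex_of_real (t\<^sup>2) + a)) \<le> K / (1 + t\<^sup>2)"
proof -
  obtain c where c0: "c > 0" and key: "\<And>u::real. u \<ge> 0 \<Longrightarrow> c * (1 + u) \<le> cmod (complex_of_real u + a)"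
    using den_bound_u[OF assms] by blast
  show ?thesis
  proof (rule that[of "1 / c"])
    show "1 / c > 0" using c0 by simp
    fix t :: real
    have p: "0 < c * (1 + t\<^sup>2)" using c0 by (simp add: add_pos_nonneg)
    show "inverse (cmod (complex_of_real (t\<^sup>2) + a)) \<le> 1 / c / (1 + t\<^sup>2)"
      using le_imp_inverse_le[OF key[of "t\<^sup>2"] p] by (simp add: field_simps)
  qed
qed

lemma integrable_W: "integrable lborel (\<lambda>t::real. K / (1 + t\<^sup>2))"
proof -
  have "integrable lborel (\<lambda>t::real. inverse (1 + t\<^sup>2))"
    using integrable_inverse_1_plus_square by (simp add: set_integrable_def einterval_eq_UNIV)
  from integrable_mult_right[OF this, of K] show ?thesis by (simp add: field_simps)
qed

definition Mk :: "complex \<Rightarrow> real \<Rightarrow> real \<Rightarrow> complex" where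
  "Mk a \<tau> t = complex_of_real (indicator {0..} t * exp (- (\<tau> * t\<^sup>2))) / (complex_of_real (t\<^sup>2) + a)"

lemma Mk_meas [measurable]: "Mk a \<tau> \<in> borel_measurable lborel"
  unfolding Mk_def by measurable

lemma Mk_bound:
  assumes "\<tau> \<ge> 0" "\<And>t::real. inverse (cmod (complex_of_real (t\<^sup>2) + a)) \<le> K / (1 + t\<^sup>2)"
  shows "cmod (Mk a \<tau> t) \<le> K / (1 + t\<^sup>2)"
proof -
  have "cmod (Mk a \<tau> t) = (indicator {0..} t * exp (- (\<tau> * t\<^sup>2))) * inverse (cmod (complex_of_real (t\<^sup>2) + a))"
    by (simp add: Mk_def norm_divide divide_inverse abs_mult indicator_def norm_mult norm_inverse)
  also have "\<dots> \<le> 1 * (K / (1 + t\<^sup>2))"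
    using assms by (intro mult_mono) (auto simp: indicator_def mult_nonneg_nonneg)
  finally show ?thesis by simp
qed



lemma has_vector_derivative_from_quotient:
  fixes F :: "real \<Rightarrow> complex"
  assumes "((\<lambda>y. (F y - F x) / complex_of_real (y - x)) \<longlongrightarrow> D) (at x)"
  shows "(F has_vector_derivative D) (at x)"
  unfolding has_vector_derivative_def has_derivative_at_within
proof (rule conjI)
  show "bounded_linear (\<lambda>h. h *\<^sub>R D)" by (rule bounded_linear_scaleR_left)
  have "((\<lambda>y. (F y - F x) / complex_of_real (y - x) - D) \<longlongrightarrow> 0) (at x)"
    using tendsto_diff[OF assms tendsto_const[of D]] by simp
  then have *: "((\<lambda>y. norm ((F y - F x) / complex_of_real (y - x) - D)) \<longlongrightarrow> 0) (at x)"
    by (rule tendsto_norm_zero)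
  have "((\<lambda>y. norm ((F y - F x - (y - x) *\<^sub>R D) /\<^sub>R norm (y - x))) \<longlongrightarrow> 0) (at x)"
  proof (rule Lim_transform_eventually[OF *])
    have "norm ((F y - F x) / complex_of_real (y - x) - D) = norm ((F y - F x - (y - x) *\<^sub>R D) /\<^sub>R norm (y - x))"
      if "y \<noteq> x" for y
    proof -
      have yx: "complex_of_real (y - x) \<noteq> 0" using that by simp
      have "(F y - F x) / complex_of_real (y - x) - D = (F y - F x - (y - x) *\<^sub>R D) / complex_of_real (y - x)"
        using yx by (simp add: diff_divide_distrib scaleR_conv_of_real)
      then show ?thesis by (simp add: norm_mult norm_inverse divide_inverse del: of_real_diff)
    qed
    then show "\<forall>\<^sub>F y in at x. norm ((F y - F x) / complex_of_real (y - x) - D) =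
        norm ((F y - F x - (y - x) *\<^sub>R D) /\<^sub>R norm (y - x))"
      unfolding eventually_at_filter by simp
  qed
  then show "((\<lambda>y. (F y - F x - (y - x) *\<^sub>R D) /\<^sub>R norm (y - x)) \<longlongrightarrow> 0) (at x within UNIV)"
    by (rule tendsto_norm_zero_cancel)
qed

lemma one_minus_exp_le: "x \<ge> 0 \<Longrightarrow> 1 - exp (- x) \<le> (x::real)"
  using exp_ge_add_one_self[of "-x"] by simp

lemma exp_diff_bound:
  fixes u h \<tau> m :: real
  assumes "u \<ge> 0" "h \<ge> m" "\<tau> \<ge> m"
  shows "\<bar>exp (- (h * u)) - exp (- (\<tau> * u))\<bar> \<le> \<bar>h - \<tau>\<bar> * u * exp (- (m * u))"
proof -
  have main: "\<bar>exp (- (p * u)) - exp (- (q * u))\<bar> \<le> \<bar>p - q\<bar> * u * exp (- (m * u))"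
    if pq: "p \<le> q" "p \<ge> m" for p q
  proof -
    have "exp (- (q * u)) = exp (- (p * u)) * exp (- ((q - p) * u))"
      by (simp add: mult_exp_exp algebra_simps)
    then have "exp (- (p * u)) - exp (- (q * u)) = exp (- (p * u)) * (1 - exp (- ((q - p) * u)))"
      by (simp add: algebra_simps)
    moreover have "0 \<le> 1 - exp (- ((q - p) * u))" using pq assms by simp
    moreover have "1 - exp (- ((q - p) * u)) \<le> (q - p) * u"
      using pq assms by (intro one_minus_exp_le) simp
    moreover have "exp (- (p * u)) \<le> exp (- (m * u))" using pq assms by (simp add: mult_right_mono)
    ultimately have "\<bar>exp (- (p * u)) - exp (- (q * u))\<bar> \<le> exp (- (m * u)) * ((q - p) * u)"
      by (simp add: mult_mono)
    then show ?thesis using pq by (simp add: algebra_simps)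
  qed
  show ?thesis
  proof (cases "h \<le> \<tau>")
    case True then show ?thesis using main[of h \<tau>] assms by simp
  next
    case False then show ?thesis using main[of \<tau> h] assms by (simp add: abs_minus_commute)
  qed
qed

lemma x_exp_bound:
  fixes u c :: real
  assumes "u \<ge> 0" "c > 0"
  shows "u * exp (- (c * u)) \<le> 1 / c"
proof -
  have "c * u \<le> exp (c * u)" using exp_ge_add_one_self[of "c * u"] by linarith
  then have "u \<le> exp (c * u) / c" using assms by (simp add: field_simps)
  then have "u * exp (- (c * u)) \<le> exp (c * u) / c * exp (- (c * u))"
    by (rule mult_right_mono) simp
  also have "\<dots> = 1 / c" by (simp add: exp_minus field_simps)
  finally show ?thesis .
qed



lemma Mk_int:
  assumes "\<tau> \<ge> 0" "K > 0" "\<And>t::real. inverse (cmod (complex_of_real (t\<^sup>2) + a)) \<le> K / (1 + t\<^sup>2)"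
  shows "integrable lborel (Mk a \<tau>)"
proof (rule Bochner_Integration.integrable_bound[OF integrable_W[of K]])
  show "Mk a \<tau> \<in> borel_measurable lborel" by simp
  show "AE t in lborel. norm (Mk a \<tau> t) \<le> norm (K / (1 + t\<^sup>2))"
    using Mk_bound[OF assms(1) assms(3)] assms(2) by (auto intro!: AE_I2 simp: add_pos_nonneg)
qed

lemma M_right0:
  assumes "K > 0" "\<And>t::real. inverse (cmod (complex_of_real (t\<^sup>2) + a)) \<le> K / (1 + t\<^sup>2)"
  shows "((\<lambda>\<tau>. integral\<^sup>L lborel (Mk a \<tau>)) \<longlongrightarrow> integral\<^sup>L lborel (Mk a 0)) (at_right 0)"
proof (rule integral_dominated_convergence_within[where w = "\<lambda>t. K / (1 + t\<^sup>2)"])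
  show "Mk a 0 \<in> borel_measurable lborel" "\<And>\<tau>. Mk a \<tau> \<in> borel_measurable lborel" by simp_all
  show "integrable lborel (\<lambda>t::real. K / (1 + t\<^sup>2))" by (rule integrable_W)
  show "AE t in lborel. ((\<lambda>\<tau>. Mk a \<tau> t) \<longlongrightarrow> Mk a 0 t) (at_right 0)"
  proof (rule AE_I2)
    fix t :: real
    have "((\<lambda>\<tau>. Mk a \<tau> t) \<longlongrightarrow> Mk a 0 t) (at 0)"
      unfolding Mk_def divide_inverse by (intro tendsto_intros)
    then show "((\<lambda>\<tau>. Mk a \<tau> t) \<longlongrightarrow> Mk a 0 t) (at_right 0)"
      by (rule filterlim_mono) (auto simp: at_le)
  qed
  show "\<forall>\<^sub>F \<tau> in at_right 0. AE t in lborel. norm (Mk a \<tau> t) \<le> K / (1 + t\<^sup>2)"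
    using eventually_at_right_less[of "0::real"]
    by eventually_elim (auto intro!: AE_I2 Mk_bound assms)
qed

lemma M_top:
  assumes "K > 0" "\<And>t::real. inverse (cmod (complex_of_real (t\<^sup>2) + a)) \<le> K / (1 + t\<^sup>2)"
  shows "((\<lambda>\<tau>. integral\<^sup>L lborel (Mk a \<tau>)) \<longlongrightarrow> 0) at_top"
proof -
  have m1: "(\<lambda>_. 0::complex) \<in> borel_measurable lborel" by simp
  have m2: "\<And>\<tau>. Mk a \<tau> \<in> borel_measurable lborel" by simp
  have iw: "integrable lborel (\<lambda>t::real. K / (1 + t\<^sup>2))" by (rule integrable_W)
  have lim: "AE t in lborel. ((\<lambda>\<tau>. Mk a \<tau> t) \<longlongrightarrow> 0) at_top"
    using AE_lborel_singleton[of 0]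
  proof eventually_elim
    fix t :: real assume "t \<noteq> 0"
    then have t2: "t\<^sup>2 > 0" by simp
    have "((\<lambda>\<tau>. exp (- (t\<^sup>2 * \<tau>))) \<longlongrightarrow> 0) at_top"
      using t2
      by (auto intro!: exp_at_bot[THEN filterlim_compose] filterlim_tendsto_pos_mult_at_top filterlim_ident
           simp: filterlim_uminus_at_bot)
    then have "((\<lambda>\<tau>. exp (- (\<tau> * t\<^sup>2))) \<longlongrightarrow> 0) at_top" by (simp add: mult.commute)
    then have "((\<lambda>\<tau>. complex_of_real (indicator {0..} t * exp (- (\<tau> * t\<^sup>2))) *
        inverse (complex_of_real (t\<^sup>2) + a)) \<longlongrightarrow> complex_of_real (indicator {0..} t * 0) * inverse (complex_of_real (t\<^sup>2) + a)) at_top"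
      by (intro tendsto_intros)
    then show "((\<lambda>\<tau>. Mk a \<tau> t) \<longlongrightarrow> 0) at_top" by (simp add: Mk_def divide_inverse)
  qed
  have bd: "\<forall>\<^sub>F \<tau> in at_top. AE t in lborel. norm (Mk a \<tau> t) \<le> K / (1 + t\<^sup>2)"
    using eventually_ge_at_top[of "0::real"]
    by eventually_elim (auto intro!: AE_I2 Mk_bound assms)
  from integral_dominated_convergence_at_top[OF m1 m2 iw lim bd] show ?thesis by simp
qed


lemma Mk_deriv_int:
  assumes "\<tau> > 0" "K > 0" "\<And>t::real. inverse (cmod (complex_of_real (t\<^sup>2) + a)) \<le> K / (1 + t\<^sup>2)"
  shows "integrable lborel (\<lambda>t. complex_of_real (- (t\<^sup>2)) * Mk a \<tau> t)"
proof (rule Bochner_Integration.integrable_bound[OF integrable_W[of "K / \<tau>"]])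
  show "(\<lambda>t. complex_of_real (- (t\<^sup>2)) * Mk a \<tau> t) \<in> borel_measurable lborel" by measurable
  show "AE t in lborel. norm (complex_of_real (- (t\<^sup>2)) * Mk a \<tau> t) \<le> norm (K / \<tau> / (1 + t\<^sup>2))"
  proof (rule AE_I2)
    fix t :: real
    have "norm (complex_of_real (- (t\<^sup>2)) * Mk a \<tau> t) =
      (t\<^sup>2 * exp (- (\<tau> * t\<^sup>2))) * (indicator {0..} t * inverse (cmod (complex_of_real (t\<^sup>2) + a)))"
      by (simp add: Mk_def norm_mult norm_divide divide_inverse abs_mult indicator_def norm_inverse norm_power)
    also have "\<dots> \<le> (1 / \<tau>) * (1 * (K / (1 + t\<^sup>2)))"
      using x_exp_bound[of "t\<^sup>2" \<tau>] assms
      by (intro mult_mono) (auto simp: indicator_def)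
    finally show "norm (complex_of_real (- (t\<^sup>2)) * Mk a \<tau> t) \<le> norm (K / \<tau> / (1 + t\<^sup>2))"
      using assms by (simp add: add_pos_nonneg)
  qed
qed

lemma M_deriv:
  assumes "\<tau> > 0" "K > 0" "\<And>t::real. inverse (cmod (complex_of_real (t\<^sup>2) + a)) \<le> K / (1 + t\<^sup>2)"
  shows "((\<lambda>s. integral\<^sup>L lborel (Mk a s)) has_vector_derivative
           integral\<^sup>L lborel (\<lambda>t. complex_of_real (- (t\<^sup>2)) * Mk a \<tau> t)) (at \<tau>)"
proof (rule has_vector_derivative_from_quotient)
  let ?s = "\<lambda>h t. (Mk a h t - Mk a \<tau> t) / complex_of_real (h - \<tau>)"
  let ?f = "\<lambda>t. complex_of_real (- (t\<^sup>2)) * Mk a \<tau> t"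
  have lim: "((\<lambda>h. integral\<^sup>L lborel (?s h)) \<longlongrightarrow> integral\<^sup>L lborel ?f) (at \<tau>)"
  proof (rule integral_dominated_convergence_within[where w = "\<lambda>t. (2 * K / \<tau>) / (1 + t\<^sup>2)"])
    show "?f \<in> borel_measurable lborel" by measurable
    show "\<And>h. ?s h \<in> borel_measurable lborel" by measurable
    show "integrable lborel (\<lambda>t::real. (2 * K / \<tau>) / (1 + t\<^sup>2))" by (rule integrable_W)
    show "AE t in lborel. ((\<lambda>h. ?s h t) \<longlongrightarrow> ?f t) (at \<tau>)"
    proof (rule AE_I2)
      fix t :: real
      define g where "g = (\<lambda>h. indicator {0..} t * exp (- (h * t\<^sup>2)) :: real)"
      have "(g has_real_derivative (indicator {0..} t * (exp (- (\<tau> * t\<^sup>2)) * (- (t\<^sup>2))))) (at \<tau>)"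
        unfolding g_def by (auto intro!: derivative_eq_intros)
      then have "((\<lambda>h. (g h - g \<tau>) / (h - \<tau>)) \<longlongrightarrow> indicator {0..} t * (exp (- (\<tau> * t\<^sup>2)) * (- (t\<^sup>2)))) (at \<tau>)"
        by (simp add: has_field_derivative_iff)
      then have "((\<lambda>h. complex_of_real ((g h - g \<tau>) / (h - \<tau>)) * inverse (complex_of_real (t\<^sup>2) + a)) \<longlongrightarrow>
          complex_of_real (indicator {0..} t * (exp (- (\<tau> * t\<^sup>2)) * (- (t\<^sup>2)))) * inverse (complex_of_real (t\<^sup>2) + a)) (at \<tau>)"
        by (intro tendsto_intros)
      moreover have e1: "?s h t = complex_of_real ((g h - g \<tau>) / (h - \<tau>)) * inverse (complex_of_real (t\<^sup>2) + a)" for h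
        by (simp add: Mk_def g_def divide_inverse algebra_simps)
      moreover have e2: "?f t = complex_of_real (indicator {0..} t * (exp (- (\<tau> * t\<^sup>2)) * (- (t\<^sup>2)))) * inverse (complex_of_real (t\<^sup>2) + a)"
        by (simp add: Mk_def divide_inverse algebra_simps)
      ultimately show "((\<lambda>h. ?s h t) \<longlongrightarrow> ?f t) (at \<tau>)" by (simp only: e1 e2)
    qed
    show "\<forall>\<^sub>F h in at \<tau>. AE t in lborel. norm (?s h t) \<le> (2 * K / \<tau>) / (1 + t\<^sup>2)"
    proof -
      have "\<forall>\<^sub>F h in at \<tau>. h \<noteq> \<tau> \<and> dist h \<tau> < \<tau> / 2"
        unfolding eventually_at using assms by (intro exI[of _ "\<tau>/2"]) auto
      then show ?thesis
      proof eventually_elim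
        case (elim h)
        then have "\<bar>h - \<tau>\<bar> < \<tau> / 2" "h \<noteq> \<tau>" by (auto simp: dist_real_def)
        then have hpos: "h \<ge> \<tau> / 2" "h \<noteq> \<tau>" by arith+
        show ?case
        proof (rule AE_I2)
          fix t :: real
          have "?s h t = complex_of_real (indicator {0..} t * (exp (- (h * t\<^sup>2)) - exp (- (\<tau> * t\<^sup>2))) / (h - \<tau>))
              * inverse (complex_of_real (t\<^sup>2) + a)"
            by (simp add: Mk_def divide_inverse algebra_simps)
          then have "norm (?s h t) = \<bar>indicator {0..} t * (exp (- (h * t\<^sup>2)) - exp (- (\<tau> * t\<^sup>2))) / (h - \<tau>)\<bar>
              * inverse (cmod (complex_of_real (t\<^sup>2) + a))"
            by (simp only: norm_mult norm_of_real norm_inverse)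
          also have "\<bar>indicator {0..} t * (exp (- (h * t\<^sup>2)) - exp (- (\<tau> * t\<^sup>2))) / (h - \<tau>)\<bar>
              * inverse (cmod (complex_of_real (t\<^sup>2) + a)) =
              indicator {0..} t * \<bar>exp (- (h * t\<^sup>2)) - exp (- (\<tau> * t\<^sup>2))\<bar> / \<bar>h - \<tau>\<bar>
              * inverse (cmod (complex_of_real (t\<^sup>2) + a))"
            by (simp add: abs_mult indicator_def)
          also have "\<dots> \<le> (2 / \<tau>) * (K / (1 + t\<^sup>2))"
          proof (rule mult_mono)
            have "\<bar>exp (- (h * t\<^sup>2)) - exp (- (\<tau> * t\<^sup>2))\<bar> \<le> \<bar>h - \<tau>\<bar> * t\<^sup>2 * exp (- (\<tau> / 2 * t\<^sup>2))"
              using hpos assms by (intro exp_diff_bound) auto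
            also have "\<dots> \<le> \<bar>h - \<tau>\<bar> * (2 / \<tau>)"
              using mult_left_mono[OF x_exp_bound[of "t\<^sup>2" "\<tau> / 2"], of "\<bar>h - \<tau>\<bar>"] assms
              by (simp add: mult.assoc)
            finally have "\<bar>exp (- (h * t\<^sup>2)) - exp (- (\<tau> * t\<^sup>2))\<bar> / \<bar>h - \<tau>\<bar> \<le> 2 / \<tau>"
              using hpos by (simp add: divide_le_eq mult.commute)
            then show "indicator {0..} t * \<bar>exp (- (h * t\<^sup>2)) - exp (- (\<tau> * t\<^sup>2))\<bar> / \<bar>h - \<tau>\<bar> \<le> 2 / \<tau>"
              using assms by (auto simp: indicator_def)
          qed (use assms in auto)
          finally show "norm (?s h t) \<le> (2 * K / \<tau>) / (1 + t\<^sup>2)" by simp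
        qed
      qed
    qed
  qed
  have "\<forall>\<^sub>F h in at \<tau>. integral\<^sup>L lborel (?s h) =
      (integral\<^sup>L lborel (Mk a h) - integral\<^sup>L lborel (Mk a \<tau>)) / complex_of_real (h - \<tau>)"
  proof -
    have "\<forall>\<^sub>F h in at \<tau>. h > 0"
      using eventually_at_topological assms
      by (metis (mono_tags) eventually_at_top_linorder greaterThan_iff open_greaterThan order_tendstoD(1) tendsto_ident_at)
    then show ?thesis
    proof eventually_elim
      case (elim h)
      then show ?case
        using Mk_int[of h K a] Mk_int[of \<tau> K a] assms
        by (simp add: integral_divide_zero integral_diff)
    qed
  qed
  with lim show "((\<lambda>y. (integral\<^sup>L lborel (Mk a y) - integral\<^sup>L lborel (Mk a \<tau>)) / complex_of_real (y - \<tau>)) \<longlongrightarrow>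
      integral\<^sup>L lborel ?f) (at \<tau>)"
    by (rule Lim_transform_eventually)
qed



lemma Re_csqrt_pos:
  assumes "Im a \<noteq> 0"
  shows "Re (csqrt a) > 0"
proof -
  have "Re (csqrt a) \<noteq> 0"
  proof
    assume "Re (csqrt a) = 0"
    then have "Im ((csqrt a)\<^sup>2) = 0" by (simp add: power2_eq_square)
    then show False using assms by simp
  qed
  then show ?thesis using Re_csqrt[of a] by linarith
qed

lemma M0:
  assumes "good a"
  shows "integral\<^sup>L lborel (Mk a 0) = complex_of_real (pi / 2) / csqrt a"
proof -
  define c where "c = csqrt a"
  have ga: "Im a \<noteq> 0" using assms by (simp add: good_def)
  have rc: "Re c > 0" unfolding c_def by (rule Re_csqrt_pos[OF ga])
  have c0: "c \<noteq> 0" using rc by auto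
  have ca: "c * c = a" unfolding c_def by (metis power2_csqrt power2_eq_square)
  obtain K where K: "K > 0" "\<And>t::real. inverse (cmod (complex_of_real (t\<^sup>2) + a)) \<le> K / (1 + t\<^sup>2)"
    using den_bound[OF assms] by blast
  define f where "f = (\<lambda>t::real. 1 / (complex_of_real (t\<^sup>2) + a))"
  define F where "F = (\<lambda>t::real. (Ln (complex_of_real t - \<i> * c) - Ln (complex_of_real t + \<i> * c)) / (2 * \<i> * c))"
  have nz: "complex_of_real (t\<^sup>2) + a \<noteq> 0" for t :: real
    using ga by (auto simp: complex_eq_iff)
  have m1: "complex_of_real x - \<i> * c \<notin> \<real>\<^sub>\<le>\<^sub>0" for x :: real
    using rc by (auto simp: complex_nonpos_Reals_iff)
  have m2: "complex_of_real x + \<i> * c \<notin> \<real>\<^sub>\<le>\<^sub>0" for x :: real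
    using rc by (auto simp: complex_nonpos_Reals_iff)
  have n1: "complex_of_real x - \<i> * c \<noteq> 0" for x :: real
    using rc by (auto simp: complex_eq_iff)
  have n2: "complex_of_real x + \<i> * c \<noteq> 0" for x :: real
    using rc by (auto simp: complex_eq_iff)
  have deriv: "(F has_vector_derivative f x) (at x)" for x :: real
  proof -
    have "((\<lambda>z. (Ln (z - \<i> * c) - Ln (z + \<i> * c)) / (2 * \<i> * c)) has_field_derivative
        (inverse (complex_of_real x - \<i> * c) - inverse (complex_of_real x + \<i> * c)) / (2 * \<i> * c)) (at (complex_of_real x))"
    proof -
      have l1: "((\<lambda>z. z - \<i> * c) has_field_derivative 1) (at (complex_of_real x))"
        using DERIV_diff[OF DERIV_ident DERIV_const] by simp
      have l2: "((\<lambda>z. z + \<i> * c) has_field_derivative 1) (at (complex_of_real x))"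
        using DERIV_add[OF DERIV_ident DERIV_const] by simp
      note d1 = DERIV_chain2[OF has_field_derivative_Ln[OF m1[of x]] l1]
      note d2 = DERIV_chain2[OF has_field_derivative_Ln[OF m2[of x]] l2]
      show ?thesis using DERIV_cdivide[OF DERIV_diff[OF d1 d2], of "2 * \<i> * c"] by simp
    qed
    moreover have "(inverse (complex_of_real x - \<i> * c) - inverse (complex_of_real x + \<i> * c)) / (2 * \<i> * c) = f x"
    proof -
      let ?A = "complex_of_real x - \<i> * c" and ?B = "complex_of_real x + \<i> * c"
      have AB: "?A * ?B = complex_of_real (x\<^sup>2) + a"
        using ca by (simp add: algebra_simps power2_eq_square)
      have "inverse ?A - inverse ?B = (?B - ?A) / (?A * ?B)"
        using n1[of x] n2[of x] by (simp add: field_simps)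
      also have "?B - ?A = 2 * \<i> * c" by simp
      finally have "inverse ?A - inverse ?B = 2 * \<i> * c / (complex_of_real (x\<^sup>2) + a)"
        unfolding AB .
      then show ?thesis unfolding f_def using c0 by simp
    qed
    ultimately have "((\<lambda>z. (Ln (z - \<i> * c) - Ln (z + \<i> * c)) / (2 * \<i> * c)) has_field_derivative f x) (at (complex_of_real x))"
      by simp
    then show ?thesis unfolding F_def by (rule has_vector_derivative_real_field)
  qed
  have cont: "isCont f x" for x
    unfolding f_def using nz[of x] by (intro continuous_intros) auto
  have fb: "norm (f t) \<le> K / (1 + t\<^sup>2)" for t
    using K(2)[of t] by (simp add: f_def norm_divide divide_inverse norm_inverse)
  have fint: "integrable lborel f"
    by (rule Bochner_Integration.integrable_bound[OF integrable_W[of K]])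
       (use fb K in \<open>auto simp: f_def intro!: AE_I2 order_trans[OF fb] add_pos_nonneg\<close>)
  have ei: "einterval 0 \<infinity> = ({0<..} :: real set)" by (auto simp: einterval_iff zero_ereal_def)
  have sint: "set_integrable lborel (einterval 0 \<infinity>) f"
    unfolding set_integrable_def ei
  proof (rule Bochner_Integration.integrable_bound[OF fint])
    show "(\<lambda>x. indicator {0<..} x *\<^sub>R f x) \<in> borel_measurable lborel"
      unfolding f_def by measurable
  qed (auto intro!: AE_I2 simp: indicator_def)
  have F0: "F 0 = - (complex_of_real pi / (2 * c))"
  proof -
    have "Ln (- (\<i> * c)) = Ln (\<i> * c) - \<i> * complex_of_real pi"
      using Ln_minus[of "\<i> * c"] rc c0 by auto
    then have "Ln (- (\<i> * c)) - Ln (\<i> * c) = - (\<i> * complex_of_real pi)" by simp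
    moreover have "F 0 = (Ln (- (\<i> * c)) - Ln (\<i> * c)) / (2 * \<i> * c)" by (simp add: F_def)
    ultimately have "F 0 = - (\<i> * complex_of_real pi) / (2 * \<i> * c)" by simp
    also have "\<dots> = - (complex_of_real pi / (2 * c))" using c0 by (simp add: field_simps)
    finally show ?thesis .
  qed
  have limF0: "(F \<longlongrightarrow> F 0) (at_right 0)"
  proof -
    have "isCont F 0" unfolding F_def using m1[of 0] m2[of 0]
      by (intro continuous_intros) auto
    then show ?thesis by (simp add: isCont_def filterlim_at_split)
  qed
  have limFinf: "(F \<longlongrightarrow> 0) at_top"
  proof -
    have inv0: "((\<lambda>t::real. complex_of_real (inverse t)) \<longlongrightarrow> 0) at_top"
    proof -
      have "((\<lambda>t::real. complex_of_real (inverse t)) \<longlongrightarrow> complex_of_real 0) at_top"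
        by (intro tendsto_of_real tendsto_inverse_0_at_top filterlim_ident)
      then show ?thesis by (simp only: of_real_0)
    qed
    have "((\<lambda>t. (Ln (1 - \<i> * c * complex_of_real (inverse t)) - Ln (1 + \<i> * c * complex_of_real (inverse t))) / (2 * \<i> * c))
        \<longlongrightarrow> (Ln (1 - \<i> * c * 0) - Ln (1 + \<i> * c * 0)) / (2 * \<i> * c)) at_top"
      by (intro tendsto_intros inv0 continuous_at_Ln[THEN isContD, THEN tendsto_compose]) (auto simp: c0)
    then have *: "((\<lambda>t. (Ln (1 - \<i> * c * complex_of_real (inverse t)) - Ln (1 + \<i> * c * complex_of_real (inverse t))) / (2 * \<i> * c))
        \<longlongrightarrow> 0) at_top" by simp
    show ?thesis
    proof (rule Lim_transform_eventually[OF *])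
      show "\<forall>\<^sub>F t in at_top. (Ln (1 - \<i> * c * complex_of_real (inverse t)) - Ln (1 + \<i> * c * complex_of_real (inverse t))) / (2 * \<i> * c) = F t"
        using eventually_gt_at_top[of "0::real"]
      proof eventually_elim
        case (elim t)
        have e1: "complex_of_real t - \<i> * c = complex_of_real t * (1 - \<i> * c * complex_of_real (inverse t))"
          using elim by (simp add: field_simps)
        have e2: "complex_of_real t + \<i> * c = complex_of_real t * (1 + \<i> * c * complex_of_real (inverse t))"
          using elim by (simp add: field_simps)
        have z1: "1 - \<i> * c * complex_of_real (inverse t) \<noteq> 0" using n1[of t] e1 by auto
        have z2: "1 + \<i> * c * complex_of_real (inverse t) \<noteq> 0" using n2[of t] e2 by auto
        show ?case unfolding F_def e1 e2
          using Ln_times_of_real[OF elim z1] Ln_times_of_real[OF elim z2] by simp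
      qed
    qed
  qed
  have "interval_lebesgue_integral lborel 0 \<infinity> f = 0 - F 0"
    by (rule interval_integral_FTC_integrable[where F = F])
       (use deriv cont sint limF0 limFinf in \<open>auto simp: zero_ereal_def ereal_tendsto_simps\<close>)
  then have I: "(LINT x:{0<..}|lborel. f x) = complex_of_real pi / (2 * c)"
    using F0 by (simp add: interval_lebesgue_integral_0_infty)
  have "integral\<^sup>L lborel (Mk a 0) = (LINT x:{0<..}|lborel. f x)"
    unfolding set_lebesgue_integral_def
  proof (rule integral_cong_AE)
    show "Mk a 0 \<in> borel_measurable lborel" by simp
    show "(\<lambda>x. indicator {0<..} x *\<^sub>R f x) \<in> borel_measurable lborel"
      unfolding f_def by measurable
    show "AE x in lborel. Mk a 0 x = indicator {0<..} x *\<^sub>R f x"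
      using AE_lborel_singleton[of 0] by eventually_elim (auto simp: Mk_def f_def indicator_def)
  qed
  with I show ?thesis unfolding c_def by simp
qed



lemma M_ode:
  assumes "good a" "\<tau> > 0" "K > 0" "\<And>t::real. inverse (cmod (complex_of_real (t\<^sup>2) + a)) \<le> K / (1 + t\<^sup>2)"
  shows "integral\<^sup>L lborel (\<lambda>t. complex_of_real (- (t\<^sup>2)) * Mk a \<tau> t) =
         a * integral\<^sup>L lborel (Mk a \<tau>) - complex_of_real (sqrt pi / (2 * sqrt \<tau>))"
proof -
  have ga: "Im a \<noteq> 0" using assms by (simp add: good_def)
  have nz: "complex_of_real (t\<^sup>2) + a \<noteq> 0" for t :: real
    using ga by (auto simp: complex_eq_iff)
  have i1: "integrable lborel (Mk a \<tau>)" using Mk_int[of \<tau> K a] assms by simp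
  have i2: "integrable lborel (\<lambda>t. complex_of_real (- (t\<^sup>2)) * Mk a \<tau> t)"
    using Mk_deriv_int[of \<tau> K a] assms by simp
  have "integral\<^sup>L lborel (\<lambda>t. a * Mk a \<tau> t - complex_of_real (- (t\<^sup>2)) * Mk a \<tau> t) =
      integral\<^sup>L lborel (\<lambda>t. complex_of_real (indicator {0..} t * exp (- (\<tau> * t\<^sup>2))))"
  proof (rule Bochner_Integration.integral_cong[OF refl])
    fix t :: real
    have "a * Mk a \<tau> t - complex_of_real (- (t\<^sup>2)) * Mk a \<tau> t = (complex_of_real (t\<^sup>2) + a) * Mk a \<tau> t"
      by (simp add: algebra_simps)
    also have "\<dots> = complex_of_real (indicator {0..} t * exp (- (\<tau> * t\<^sup>2)))"
      unfolding Mk_def using nz[of t] by simp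
    finally show "a * Mk a \<tau> t - complex_of_real (- (t\<^sup>2)) * Mk a \<tau> t =
      complex_of_real (indicator {0..} t * exp (- (\<tau> * t\<^sup>2)))" .
  qed
  also have "\<dots> = complex_of_real (sqrt pi / (2 * sqrt \<tau>))"
    by (simp only: integral_complex_of_real gauss_half[OF assms(2)])
  finally have "a * integral\<^sup>L lborel (Mk a \<tau>) - integral\<^sup>L lborel (\<lambda>t. complex_of_real (- (t\<^sup>2)) * Mk a \<tau> t)
      = complex_of_real (sqrt pi / (2 * sqrt \<tau>))"
    using i1 i2 by (simp add: integral_diff)
  then show ?thesis by (simp add: algebra_simps)
qed

lemma fa_right0:
  assumes "a \<noteq> 0"
  shows "((fa a) \<longlongrightarrow> fa a 0) (at_right 0)"
proof -
  have "((\<lambda>t. exp (a * complex_of_real t) * Erfc (csqrt a * complex_of_real (sqrt t)) / csqrt a) \<longlongrightarrow>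
         exp (a * complex_of_real 0) * Erfc (csqrt a * complex_of_real (sqrt 0)) / csqrt a) (at_right 0)"
  proof -
    have s: "((\<lambda>t. csqrt a * complex_of_real (sqrt t)) \<longlongrightarrow> csqrt a * complex_of_real (sqrt 0)) (at_right 0)"
      by (intro tendsto_intros)
    have e: "((\<lambda>t. Erfc (csqrt a * complex_of_real (sqrt t))) \<longlongrightarrow> Erfc (csqrt a * complex_of_real (sqrt 0))) (at_right 0)"
      by (rule isCont_tendsto_compose[OF continuous_Erfc s])
    have x: "((\<lambda>t. exp (a * complex_of_real t)) \<longlongrightarrow> exp (a * complex_of_real 0)) (at_right 0)"
      by (intro tendsto_intros)
    show ?thesis using tendsto_divide[OF tendsto_mult[OF x e] tendsto_const[of "csqrt a"]] assms by simp
  qed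
  moreover have "fa a 0 = exp (a * complex_of_real 0) * Erfc (csqrt a * complex_of_real (sqrt 0)) / csqrt a"
    by (simp add: fa_def)
  ultimately have lim0: "((\<lambda>t. exp (a * complex_of_real t) * Erfc (csqrt a * complex_of_real (sqrt t)) / csqrt a) \<longlongrightarrow> fa a 0) (at_right 0)"
    by simp
  have ev: "\<forall>\<^sub>F t in at_right 0. exp (a * complex_of_real t) * Erfc (csqrt a * complex_of_real (sqrt t)) / csqrt a = fa a t"
    using eventually_at_right_less[of "0::real"]
    by eventually_elim (simp add: fa_def csqrt_mult_real)
  from Lim_transform_eventually[OF lim0 ev] show ?thesis by simp
qed

lemma fa_eq_M:
  assumes "good a" "\<tau> \<ge> 0"
  shows "fa a \<tau> = complex_of_real (2 / pi) * integral\<^sup>L lborel (Mk a \<tau>)"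
proof -
  have ga: "Im a \<noteq> 0" using assms by (simp add: good_def)
  have a0: "a \<noteq> 0" using ga by auto
  have sa0: "csqrt a \<noteq> 0" using a0 by simp
  obtain K where K: "K > 0" "\<And>t::real. inverse (cmod (complex_of_real (t\<^sup>2) + a)) \<le> K / (1 + t\<^sup>2)"
    using den_bound[OF assms(1)] by blast
  define F where "F = (\<lambda>t. complex_of_real (2 / pi) * integral\<^sup>L lborel (Mk a t))"
  define D where "D = (\<lambda>t. fa a t - F t)"
  define E where "E = (\<lambda>t. exp (- (a * complex_of_real t)) * D t)"
  have F0: "F 0 = 1 / csqrt a" unfolding F_def using M0[OF assms(1)] by simp
  have fa0: "fa a 0 = 1 / csqrt a" by (simp add: fa_def)
  have D0: "D 0 = 0" unfolding D_def using F0 fa0 by simp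
  have Fd: "(F has_vector_derivative (a * F t - 1 / complex_of_real (sqrt (pi * t)))) (at t)" if t: "t > 0" for t
  proof -
    have "(F has_vector_derivative complex_of_real (2 / pi) *
        (a * integral\<^sup>L lborel (Mk a t) - complex_of_real (sqrt pi / (2 * sqrt t)))) (at t)"
    proof -
      have d: "((\<lambda>s. integral\<^sup>L lborel (Mk a s)) has_vector_derivative
          (a * integral\<^sup>L lborel (Mk a t) - complex_of_real (sqrt pi / (2 * sqrt t)))) (at t)"
        using M_deriv[OF t K] unfolding M_ode[OF assms(1) t K] .
      show ?thesis unfolding F_def by (rule has_vector_derivative_mult_right[OF d])
    qed
    moreover have "complex_of_real (2 / pi) * (a * integral\<^sup>L lborel (Mk a t) - complex_of_real (sqrt pi / (2 * sqrt t)))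
        = a * F t - 1 / complex_of_real (sqrt (pi * t))"
    proof -
      have "2 / pi * (sqrt pi / (2 * sqrt t)) = 1 / sqrt (pi * t)"
        using t pi_gt_zero by (simp add: real_sqrt_mult field_simps)
      then have "complex_of_real (2 / pi) * complex_of_real (sqrt pi / (2 * sqrt t)) = 1 / complex_of_real (sqrt (pi * t))"
        by (metis of_real_1 of_real_divide of_real_mult)
      then show ?thesis unfolding F_def by (simp add: algebra_simps)
    qed
    ultimately show ?thesis by simp
  qed
  have Dd: "(D has_vector_derivative (a * D t)) (at t)" if t: "t > 0" for t
  proof -
    have "(D has_vector_derivative ((a * fa a t - 1 / complex_of_real (sqrt (pi * t))) -
        (a * F t - 1 / complex_of_real (sqrt (pi * t))))) (at t)"
      unfolding D_def by (intro has_vector_derivative_diff fa_deriv[OF ga t] Fd[OF t])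
    then show ?thesis unfolding D_def by (simp add: algebra_simps)
  qed
  have Ed: "(E has_vector_derivative 0) (at t)" if t: "t > 0" for t
  proof -
    have "((\<lambda>z. exp (- (a * z))) has_field_derivative (exp (- (a * complex_of_real t)) * (- a))) (at (complex_of_real t))"
      by (auto intro!: derivative_eq_intros)
    then have e: "((\<lambda>s. exp (- (a * complex_of_real s))) has_vector_derivative (exp (- (a * complex_of_real t)) * (- a))) (at t)"
      by (rule has_vector_derivative_real_field)
    have "(E has_vector_derivative (exp (- (a * complex_of_real t)) * (a * D t) + (exp (- (a * complex_of_real t)) * (- a)) * D t)) (at t)"
      unfolding E_def by (rule has_vector_derivative_mult[OF e Dd[OF t]])
    then show ?thesis by (simp add: algebra_simps)
  qed
  obtain C where C: "\<And>t. t \<in> {0<..} \<Longrightarrow> E t = C"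
    by (rule has_vector_derivative_zero_constant[of "{0<..}" E])
       (auto intro!: has_vector_derivative_at_within Ed)
  have Dlim: "(D \<longlongrightarrow> 0) (at_right 0)"
  proof -
    have "(F \<longlongrightarrow> F 0) (at_right 0)"
      unfolding F_def by (intro tendsto_intros M_right0[OF K])
    then have "(D \<longlongrightarrow> fa a 0 - F 0) (at_right 0)"
      unfolding D_def by (intro tendsto_intros fa_right0 a0)
    then show ?thesis using D0 unfolding D_def by simp
  qed
  have "(E \<longlongrightarrow> exp (- (a * complex_of_real 0)) * 0) (at_right 0)"
    unfolding E_def by (intro tendsto_intros Dlim)
  then have E0: "(E \<longlongrightarrow> 0) (at_right 0)" by simp
  have "(E \<longlongrightarrow> C) (at_right 0)"
    by (rule tendsto_eventually) (use eventually_at_right_less[of "0::real"] C in \<open>auto elim: eventually_mono\<close>)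
  then have "C = 0" using E0 tendsto_unique[OF trivial_limit_at_right_real] by blast
  show ?thesis
  proof (cases "\<tau> = 0")
    case True then show ?thesis using D0 unfolding D_def F_def by simp
  next
    case False
    then have "\<tau> > 0" using assms by simp
    then have "E \<tau> = 0" using C \<open>C = 0\<close> by simp
    then have "D \<tau> = 0" unfolding E_def by simp
    then show ?thesis unfolding D_def F_def by simp
  qed
qed



lemma alpha_facts:
  fixes \<kappa> :: real and \<alpha> :: complex
  assumes eq: "\<alpha>\<^sup>2 + complex_of_real (2 - \<kappa>) * \<alpha> + 1 = 0" and im: "Im \<alpha> > 0"
  shows "Re \<alpha> = (\<kappa> - 2) / 2" "(Re \<alpha>)\<^sup>2 + (Im \<alpha>)\<^sup>2 = 1"
proof -
  let ?x = "Re \<alpha>" and ?y = "Im \<alpha>"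
  have r: "?x\<^sup>2 - ?y\<^sup>2 + (2 - \<kappa>) * ?x + 1 = 0"
    using arg_cong[OF eq, of Re] by (simp add: power2_eq_square)
  have i: "2 * ?x * ?y + (2 - \<kappa>) * ?y = 0"
    using arg_cong[OF eq, of Im] by (simp add: power2_eq_square algebra_simps)
  then have "?y * (2 * ?x + (2 - \<kappa>)) = 0" by (simp add: algebra_simps)
  then have "2 * ?x + (2 - \<kappa>) = 0" using im by simp
  then show x: "?x = (\<kappa> - 2) / 2" by simp
  from r have "?y\<^sup>2 = ?x\<^sup>2 + (2 - \<kappa>) * ?x + 1" by simp
  also have "(2 - \<kappa>) * ?x = - 2 * ?x\<^sup>2"
  proof -
    have k: "2 - \<kappa> = - 2 * ?x" using x by simp
    show ?thesis unfolding k by (simp add: power2_eq_square)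
  qed
  finally show "?x\<^sup>2 + ?y\<^sup>2 = 1" by simp
qed

lemma good_of:
  assumes "(Re a)\<^sup>2 + (Im a)\<^sup>2 = 1" "Im a \<noteq> 0"
  shows "good a"
  using assms unfolding good_def cmod_def by simp

lemma u0_structure:
  fixes \<kappa> :: real and \<alpha> \<beta> :: complex
  assumes "0 < \<kappa>" "\<kappa> < 4"
    and eq: "\<alpha>\<^sup>2 + complex_of_real (2 - \<kappa>) * \<alpha> + 1 = 0"
    and im: "Im \<alpha> > 0"
    and b: "\<beta> = cnj \<alpha>"
  defines "Q \<equiv> (\<lambda>t::real. (t\<^sup>2 + Re \<alpha>)\<^sup>2 + (Im \<alpha>)\<^sup>2)"
  shows "\<And>\<tau>. \<tau> \<ge> 0 \<Longrightarrow> u0 \<kappa> \<alpha> \<beta> \<tau> = complex_of_real (1 - 2 / pi * sqrt \<kappa> *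
             integral\<^sup>L lborel (\<lambda>t. indicator {0..} t * exp (- (\<tau> * t\<^sup>2)) / Q t))"
    and "\<And>\<tau>. \<tau> > 0 \<Longrightarrow> ((\<lambda>t. Re (u0 \<kappa> \<alpha> \<beta> t)) has_real_derivative
             2 / pi * sqrt \<kappa> * integral\<^sup>L lborel (\<lambda>t. indicator {0..} t * exp (- (\<tau> * t\<^sup>2)) * t\<^sup>2 / Q t)) (at \<tau>)"
    and "\<And>\<tau>. \<tau> > 0 \<Longrightarrow> integral\<^sup>L lborel (\<lambda>t. indicator {0..} t * exp (- (\<tau> * t\<^sup>2)) * t\<^sup>2 / Q t) > 0"
    and "((\<lambda>t. Re (u0 \<kappa> \<alpha> \<beta> t)) \<longlongrightarrow> 1) at_top"
proof -
  define x where "x = Re \<alpha>"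
  define y where "y = Im \<alpha>"
  have x: "x = (\<kappa> - 2) / 2" and xy: "x\<^sup>2 + y\<^sup>2 = 1"
    using alpha_facts[OF eq im] by (simp_all add: x_def y_def)
  have y0: "y > 0" using im by (simp add: y_def)
  have ga: "good \<alpha>" using good_of[of \<alpha>] xy y0 by (simp add: x_def y_def)
  have gb: "good \<beta>" using good_of[of \<beta>] xy y0 by (simp add: x_def y_def b)
  have ab: "\<alpha> - \<beta> = 2 * \<i> * complex_of_real y" by (simp add: b y_def complex_eq_iff)
  have ab0: "\<alpha> - \<beta> \<noteq> 0" using ab y0 by simp
  have Qpos: "Q t > 0" for t using y0 unfolding Q_def y_def[symmetric] by (simp add: add_nonneg_pos)
  have QQ: "(complex_of_real (t\<^sup>2) + \<alpha>) * (complex_of_real (t\<^sup>2) + \<beta>) = complex_of_real (Q t)" for t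
    by (simp add: Q_def b complex_eq_iff power2_eq_square algebra_simps)
  have nza: "complex_of_real (t\<^sup>2) + \<alpha> \<noteq> 0" for t
    using y0 by (auto simp: complex_eq_iff y_def)
  have nzb: "complex_of_real (t\<^sup>2) + \<beta> \<noteq> 0" for t
    using y0 by (auto simp: complex_eq_iff y_def b)
  define c where "c = complex_of_real (sqrt \<kappa>) / (\<alpha> - \<beta>)"
  have cab: "c * (\<alpha> - \<beta>) = complex_of_real (sqrt \<kappa>)" using ab0 by (simp add: c_def)
  obtain Ka where Ka: "Ka > 0" "\<And>t::real. inverse (cmod (complex_of_real (t\<^sup>2) + \<alpha>)) \<le> Ka / (1 + t\<^sup>2)"
    using den_bound[OF ga] by blast
  obtain Kb where Kb: "Kb > 0" "\<And>t::real. inverse (cmod (complex_of_real (t\<^sup>2) + \<beta>)) \<le> Kb / (1 + t\<^sup>2)"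
    using den_bound[OF gb] by blast
  have ia: "integrable lborel (Mk \<alpha> \<tau>)" if "\<tau> \<ge> 0" for \<tau> using Mk_int[OF that Ka] .
  have ib: "integrable lborel (Mk \<beta> \<tau>)" if "\<tau> \<ge> 0" for \<tau> using Mk_int[OF that Kb] .
  have pw1: "c * (Mk \<alpha> \<tau> t - Mk \<beta> \<tau> t) =
      complex_of_real (- sqrt \<kappa> * (indicator {0..} t * exp (- (\<tau> * t\<^sup>2)) / Q t))" for \<tau> t
  proof -
    have "Mk \<alpha> \<tau> t - Mk \<beta> \<tau> t = complex_of_real (indicator {0..} t * exp (- (\<tau> * t\<^sup>2))) *
        ((complex_of_real (t\<^sup>2) + \<beta>) - (complex_of_real (t\<^sup>2) + \<alpha>)) /
        ((complex_of_real (t\<^sup>2) + \<alpha>) * (complex_of_real (t\<^sup>2) + \<beta>))"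
      unfolding Mk_def using nza[of t] nzb[of t] by (simp add: field_simps)
    also have "\<dots> = - (complex_of_real (indicator {0..} t * exp (- (\<tau> * t\<^sup>2))) * (\<alpha> - \<beta>)) / complex_of_real (Q t)"
      unfolding QQ by (simp add: algebra_simps)
    finally have "c * (Mk \<alpha> \<tau> t - Mk \<beta> \<tau> t) = - (complex_of_real (indicator {0..} t * exp (- (\<tau> * t\<^sup>2))) * (c * (\<alpha> - \<beta>))) / complex_of_real (Q t)"
      by (simp add: algebra_simps)
    then show ?thesis unfolding cab by simp
  qed
  have pw2: "c * (\<alpha> * Mk \<alpha> \<tau> t - \<beta> * Mk \<beta> \<tau> t) =
      complex_of_real (sqrt \<kappa> * (indicator {0..} t * exp (- (\<tau> * t\<^sup>2)) * t\<^sup>2 / Q t))" for \<tau> t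
  proof -
    have "\<alpha> * Mk \<alpha> \<tau> t - \<beta> * Mk \<beta> \<tau> t = complex_of_real (indicator {0..} t * exp (- (\<tau> * t\<^sup>2))) *
        (\<alpha> * (complex_of_real (t\<^sup>2) + \<beta>) - \<beta> * (complex_of_real (t\<^sup>2) + \<alpha>)) /
        ((complex_of_real (t\<^sup>2) + \<alpha>) * (complex_of_real (t\<^sup>2) + \<beta>))"
      unfolding Mk_def using nza[of t] nzb[of t] by (simp add: field_simps)
    also have "\<dots> = complex_of_real (indicator {0..} t * exp (- (\<tau> * t\<^sup>2)) * t\<^sup>2) * (\<alpha> - \<beta>) / complex_of_real (Q t)"
      unfolding QQ by (simp add: algebra_simps)
    finally have "c * (\<alpha> * Mk \<alpha> \<tau> t - \<beta> * Mk \<beta> \<tau> t) = complex_of_real (indicator {0..} t * exp (- (\<tau> * t\<^sup>2)) * t\<^sup>2) * (c * (\<alpha> - \<beta>)) / complex_of_real (Q t)"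
      by (simp add: algebra_simps)
    then show ?thesis unfolding cab by simp
  qed
  have u0eq: "u0 \<kappa> \<alpha> \<beta> \<tau> = 1 + c * (fa \<alpha> \<tau> - fa \<beta> \<tau>)" for \<tau>
    by (simp add: u0_fa c_def)
  show val: "u0 \<kappa> \<alpha> \<beta> \<tau> = complex_of_real (1 - 2 / pi * sqrt \<kappa> *
             integral\<^sup>L lborel (\<lambda>t. indicator {0..} t * exp (- (\<tau> * t\<^sup>2)) / Q t))" if t: "\<tau> \<ge> 0" for \<tau>
  proof -
    have "c * (fa \<alpha> \<tau> - fa \<beta> \<tau>) = complex_of_real (2 / pi) * integral\<^sup>L lborel (\<lambda>t. c * (Mk \<alpha> \<tau> t - Mk \<beta> \<tau> t))"
      using fa_eq_M[OF ga t] fa_eq_M[OF gb t] ia[OF t] ib[OF t]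
      by (simp add: integral_diff algebra_simps)
    also have "\<dots> = complex_of_real (2 / pi) * integral\<^sup>L lborel (\<lambda>t. complex_of_real (- sqrt \<kappa> * (indicator {0..} t * exp (- (\<tau> * t\<^sup>2)) / Q t)))"
      unfolding pw1 ..
    also have "\<dots> = complex_of_real (- (2 / pi * sqrt \<kappa> * integral\<^sup>L lborel (\<lambda>t. indicator {0..} t * exp (- (\<tau> * t\<^sup>2)) / Q t)))"
      by (simp only: integral_complex_of_real integral_mult_right_zero of_real_mult) (simp add: algebra_simps)
    finally show ?thesis unfolding u0eq by simp
  qed
  have h2int: "integrable lborel (\<lambda>t. indicator {0..} t * exp (- (\<tau> * t\<^sup>2)) * t\<^sup>2 / Q t)" if t: "\<tau> > 0" for \<tau>
  proof -
    have t0: "\<tau> \<ge> 0" using t by simp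
    have "integrable lborel (\<lambda>t. c * (\<alpha> * Mk \<alpha> \<tau> t - \<beta> * Mk \<beta> \<tau> t) / complex_of_real (sqrt \<kappa>))"
      using Bochner_Integration.integrable_divide[OF integrable_mult_right[OF Bochner_Integration.integrable_diff[OF
          integrable_mult_right[OF ia[OF t0]] integrable_mult_right[OF ib[OF t0]]]]]
      by simp
    moreover have "c * (\<alpha> * Mk \<alpha> \<tau> t - \<beta> * Mk \<beta> \<tau> t) / complex_of_real (sqrt \<kappa>) =
        complex_of_real (indicator {0..} t * exp (- (\<tau> * t\<^sup>2)) * t\<^sup>2 / Q t)" for t
      unfolding pw2 using assms(1) by simp
    ultimately have "integrable lborel (\<lambda>t. complex_of_real (indicator {0..} t * exp (- (\<tau> * t\<^sup>2)) * t\<^sup>2 / Q t))"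
      by simp
    then show ?thesis by (simp only: complex_of_real_integrable_eq)
  qed
  show "((\<lambda>t. Re (u0 \<kappa> \<alpha> \<beta> t)) has_real_derivative
             2 / pi * sqrt \<kappa> * integral\<^sup>L lborel (\<lambda>t. indicator {0..} t * exp (- (\<tau> * t\<^sup>2)) * t\<^sup>2 / Q t)) (at \<tau>)"
    if t: "\<tau> > 0" for \<tau>
  proof -
    have t0: "\<tau> \<ge> 0" using t by simp
    let ?s = "1 / complex_of_real (sqrt (pi * \<tau>))"
    have d: "((\<lambda>t. 1 + c * (fa \<alpha> t - fa \<beta> t)) has_vector_derivative
        (0 + c * ((\<alpha> * fa \<alpha> \<tau> - ?s) - (\<beta> * fa \<beta> \<tau> - ?s)))) (at \<tau>)"
      using ga gb t unfolding good_def
      by (intro has_vector_derivative_add has_vector_derivative_const has_vector_derivative_mult_right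
            has_vector_derivative_diff fa_deriv) auto
    have "0 + c * ((\<alpha> * fa \<alpha> \<tau> - ?s) - (\<beta> * fa \<beta> \<tau> - ?s)) = c * (\<alpha> * fa \<alpha> \<tau> - \<beta> * fa \<beta> \<tau>)"
      by simp
    also have "\<dots> = complex_of_real (2 / pi) * integral\<^sup>L lborel (\<lambda>t. c * (\<alpha> * Mk \<alpha> \<tau> t - \<beta> * Mk \<beta> \<tau> t))"
      using fa_eq_M[OF ga t0] fa_eq_M[OF gb t0] ia[OF t0] ib[OF t0]
      by (simp add: integral_diff algebra_simps)
    also have "\<dots> = complex_of_real (2 / pi) * integral\<^sup>L lborel (\<lambda>t. complex_of_real (sqrt \<kappa> * (indicator {0..} t * exp (- (\<tau> * t\<^sup>2)) * t\<^sup>2 / Q t)))"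
      unfolding pw2 ..
    also have "\<dots> = complex_of_real (2 / pi * sqrt \<kappa> * integral\<^sup>L lborel (\<lambda>t. indicator {0..} t * exp (- (\<tau> * t\<^sup>2)) * t\<^sup>2 / Q t))"
      by (simp only: integral_complex_of_real integral_mult_right_zero of_real_mult) (simp add: algebra_simps)
    finally have d2: "((\<lambda>t. u0 \<kappa> \<alpha> \<beta> t) has_vector_derivative
        complex_of_real (2 / pi * sqrt \<kappa> * integral\<^sup>L lborel (\<lambda>t. indicator {0..} t * exp (- (\<tau> * t\<^sup>2)) * t\<^sup>2 / Q t))) (at \<tau>)"
      using d unfolding u0eq by simp
    have "((\<lambda>t. Re (u0 \<kappa> \<alpha> \<beta> t)) has_vector_derivative
        Re (complex_of_real (2 / pi * sqrt \<kappa> * integral\<^sup>L lborel (\<lambda>t. indicator {0..} t * exp (- (\<tau> * t\<^sup>2)) * t\<^sup>2 / Q t)))) (at \<tau>)"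
      by (rule bounded_linear.has_vector_derivative[OF bounded_linear_Re d2])
    then show ?thesis by (simp add: has_real_derivative_iff_has_vector_derivative)
  qed
  show "integral\<^sup>L lborel (\<lambda>t. indicator {0..} t * exp (- (\<tau> * t\<^sup>2)) * t\<^sup>2 / Q t) > 0"
    if t: "\<tau> > 0" for \<tau>
  proof -
    define m where "m = exp (- (4 * \<tau>)) / 25"
    have m0: "m > 0" by (simp add: m_def)
    have "x\<^sup>2 \<le> 1" using xy zero_le_power2[of y] by linarith
    then have x1: "x \<le> 1" by (simp add: abs_square_le_1)
    have lb: "m * indicator {1..2::real} t \<le> indicator {0..} t * exp (- (\<tau> * t\<^sup>2)) * t\<^sup>2 / Q t" for t
    proof (cases "t \<in> {1..2}")
      case True
      then have t1: "1 \<le> t" "t \<le> 2" by auto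
      have tt: "1 \<le> t\<^sup>2" "t\<^sup>2 \<le> 4"
        using power_mono[OF t1(1), of 2] power_mono[OF t1(2), of 2] t1 by simp_all
      have "Q t = (t\<^sup>2)\<^sup>2 + 2 * x * t\<^sup>2 + 1" unfolding Q_def x_def[symmetric] y_def[symmetric]
        using xy by (simp add: power2_sum algebra_simps)
      also have "\<dots> \<le> 25"
      proof -
        have "(t\<^sup>2)\<^sup>2 \<le> 4\<^sup>2" using power_mono[OF tt(2), of 2] by simp
        moreover have "x * t\<^sup>2 \<le> 1 * 4" using x1 tt by (intro mult_mono) auto
        ultimately show ?thesis by simp
      qed
      finally have Q25: "Q t \<le> 25" .
      have e: "exp (- (4 * \<tau>)) \<le> exp (- (\<tau> * t\<^sup>2))" using tt t by (simp add: mult_left_mono mult.commute)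
      have "1 / 25 \<le> 1 / Q t" using frac_le[of 1 1 "Q t" 25] Qpos[of t] Q25 by simp
      also have "1 / Q t \<le> t\<^sup>2 / Q t" using divide_right_mono[OF tt(1), of "Q t"] Qpos[of t] by simp
      finally have "1 / 25 \<le> t\<^sup>2 / Q t" .
      then have "exp (- (4 * \<tau>)) * (1 / 25) \<le> exp (- (\<tau> * t\<^sup>2)) * (t\<^sup>2 / Q t)"
        using e by (intro mult_mono) auto
      then show ?thesis using True t1 by (simp add: m_def indicator_def)
    next
      case False
      have "0 \<le> indicator {0..} t * exp (- (\<tau> * t\<^sup>2)) * t\<^sup>2 / Q t"
        using Qpos[of t] by (simp add: indicator_def)
      then show ?thesis using False by simp
    qed
    have "integral\<^sup>L lborel (\<lambda>t. m * indicator {1..2::real} t) \<le>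
        integral\<^sup>L lborel (\<lambda>t. indicator {0..} t * exp (- (\<tau> * t\<^sup>2)) * t\<^sup>2 / Q t)"
      by (rule integral_mono[OF _ h2int[OF t] lb]) (auto intro!: integrable_mult_right)
    moreover have "integral\<^sup>L lborel (\<lambda>t. m * indicator {1..2::real} t) = m"
      by (simp add: measure_lborel_Icc)
    ultimately show ?thesis using m0 by simp
  qed
  show "((\<lambda>t. Re (u0 \<kappa> \<alpha> \<beta> t)) \<longlongrightarrow> 1) at_top"
  proof -
    have fa_lim: "((\<lambda>t. fa a t) \<longlongrightarrow> 0) at_top" if g: "good a" for a
    proof -
      obtain K where K: "K > 0" "\<And>t::real. inverse (cmod (complex_of_real (t\<^sup>2) + a)) \<le> K / (1 + t\<^sup>2)"
        using den_bound[OF g] by blast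
      have "((\<lambda>t. complex_of_real (2 / pi) * integral\<^sup>L lborel (Mk a t)) \<longlongrightarrow> complex_of_real (2 / pi) * 0) at_top"
        by (intro tendsto_intros M_top[OF K])
      then have l: "((\<lambda>t. complex_of_real (2 / pi) * integral\<^sup>L lborel (Mk a t)) \<longlongrightarrow> 0) at_top" by simp
      have "\<forall>\<^sub>F t in at_top. complex_of_real (2 / pi) * integral\<^sup>L lborel (Mk a t) = fa a t"
        using eventually_ge_at_top[of "0::real"] by eventually_elim (simp add: fa_eq_M[OF g])
      from Lim_transform_eventually[OF l this] show ?thesis .
    qed
    have "((\<lambda>t. 1 + c * (fa \<alpha> t - fa \<beta> t)) \<longlongrightarrow> 1 + c * (0 - 0)) at_top"
      by (intro tendsto_intros fa_lim ga gb)
    then have "((\<lambda>t. u0 \<kappa> \<alpha> \<beta> t) \<longlongrightarrow> 1) at_top" unfolding u0eq by simp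
    from tendsto_Re[OF this] show ?thesis by simp
  qed
qed



theorem theorem3p1:
  fixes \<kappa> :: real and \<alpha> \<beta> :: complex
  assumes "0 < \<kappa>" "\<kappa> < 4"
    and "\<alpha>\<^sup>2 + complex_of_real (2 - \<kappa>) * \<alpha> + 1 = 0"
    and "Im \<alpha> > 0"
    and "\<beta> = cnj \<alpha>"
  shows "(\<forall>\<tau>\<ge>0. Im (u0 \<kappa> \<alpha> \<beta> \<tau>) = 0)
       \<and> (\<forall>\<tau>>0. ((\<lambda>t. Re (u0 \<kappa> \<alpha> \<beta> t)) has_real_derivative
                    deriv (\<lambda>t. Re (u0 \<kappa> \<alpha> \<beta> t)) \<tau>) (at \<tau>)
               \<and> deriv (\<lambda>t. Re (u0 \<kappa> \<alpha> \<beta> t)) \<tau> > 0)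
       \<and> ((\<lambda>t. Re (u0 \<kappa> \<alpha> \<beta> t)) \<longlongrightarrow> 1) at_top"
proof (intro conjI allI impI)
  note S = u0_structure[OF assms]
  show "Im (u0 \<kappa> \<alpha> \<beta> \<tau>) = 0" if "\<tau> \<ge> 0" for \<tau>
    using S(1)[OF that] by simp
  fix \<tau> :: real assume t: "\<tau> > 0"
  note d = S(2)[OF t]
  note p = S(3)[OF t]
  show "((\<lambda>t. Re (u0 \<kappa> \<alpha> \<beta> t)) has_real_derivative deriv (\<lambda>t. Re (u0 \<kappa> \<alpha> \<beta> t)) \<tau>) (at \<tau>)"
    unfolding DERIV_imp_deriv[OF d] by (rule d)
  show "deriv (\<lambda>t. Re (u0 \<kappa> \<alpha> \<beta> t)) \<tau> > 0"
    unfolding DERIV_imp_deriv[OF d] using p assms(1) by simp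
next
  show "((\<lambda>t. Re (u0 \<kappa> \<alpha> \<beta> t)) \<longlongrightarrow> 1) at_top" by (rule u0_structure(4)[OF assms])
qed

end
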